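(* Let $X$ be a CFG-space over a Boolean ring $B$ and $Y\subseteq X$ (with the restricted metric). Then $Y$ is a CFG-space if and only if there exists a contractive map $f:X\to B$ such that $Y=f^{-1}(0)$.
   Context: $B$ is a Boolean ring ($a\vee b=a+b+ab$, $a\le b\iff ab=a$; $a_1\oplus\cdots\oplus a_n$ denotes a sum of pairwise disjoint elements); $B$ is itself regarded as a Boolean metric space with $d(a,b)=a+b$. A Boolean metric space over $B$: set $X$ with $d:X\times X\to B$, $d(x,y)=0\iff x=y$, symmetric, $d(x,z)\le d(x,y)\vee d(y,z)$. For $x_1,\dots,x_n\in X$, $a_i\in B$ with $a_1\oplus\cdots\oplus a_n=1$, $x$ is a convex combination of the $x_i$ with coefficients $a_i$ if $a_id(x,x_i)=0$ for all $i$. A CFG-space is a space in which all such combinations exist and every element is a convex combination of elements of some fixed finite subset (the empty space counts as a CFG-space). A map $f$ is contractive if $d(f(x),f(y))\le d(x,y)$ for all $x,y$. *)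

theory Defs
  imports Main
begin

definition boolean_ring :: "'b::comm_ring_1 itself \<Rightarrow> bool" where
  "boolean_ring _ \<longleftrightarrow> (\<forall>a::'b. a * a = a)"

definition bjoin :: "'b::comm_ring_1 \<Rightarrow> 'b \<Rightarrow> 'b" where
  "bjoin a b = a + b + a * b"

definition ble :: "'b::comm_ring_1 \<Rightarrow> 'b \<Rightarrow> bool" where
  "ble a b \<longleftrightarrow> a * b = a"

definition bool_metric_space :: "'a set \<Rightarrow> ('a \<Rightarrow> 'a \<Rightarrow> 'b::comm_ring_1) \<Rightarrow> bool" where
  "bool_metric_space X d \<longleftrightarrow>
     (\<forall>x\<in>X. \<forall>y\<in>X. (d x y = 0 \<longleftrightarrow> x = y)) \<and>
     (\<forall>x\<in>X. \<forall>y\<in>X. d x y = d y x) \<and>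
     (\<forall>x\<in>X. \<forall>y\<in>X. \<forall>z\<in>X. ble (d x z) (bjoin (d x y) (d y z)))"

definition disjoint_partition_unity :: "nat \<Rightarrow> (nat \<Rightarrow> 'b::comm_ring_1) \<Rightarrow> bool" where
  "disjoint_partition_unity n a \<longleftrightarrow>
     (\<forall>i<n. \<forall>j<n. i \<noteq> j \<longrightarrow> a i * a j = 0) \<and> (\<Sum>i<n. a i) = 1"

definition convex_comb :: "('a \<Rightarrow> 'a \<Rightarrow> 'b::comm_ring_1) \<Rightarrow> 'a \<Rightarrow> nat \<Rightarrow> (nat \<Rightarrow> 'a) \<Rightarrow> (nat \<Rightarrow> 'b) \<Rightarrow> bool" where
  "convex_comb d x n xs a \<longleftrightarrow> (\<forall>i<n. a i * d x (xs i) = 0)"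

definition CFG_space :: "'a set \<Rightarrow> ('a \<Rightarrow> 'a \<Rightarrow> 'b::comm_ring_1) \<Rightarrow> bool" where
  "CFG_space X d \<longleftrightarrow> bool_metric_space X d \<and>
     (X = {} \<or>
      ((\<forall>n xs a. (\<forall>i<n. xs i \<in> X) \<and> disjoint_partition_unity n a \<longrightarrow>
          (\<exists>x\<in>X. convex_comb d x n xs a)) \<and>
       (\<exists>S. finite S \<and> S \<subseteq> X \<and>
          (\<forall>x\<in>X. \<exists>n xs a. (\<forall>i<n. xs i \<in> S) \<and> disjoint_partition_unity n a \<and>
                          convex_comb d x n xs a))))"

text \<open>Contractive map X \<rightarrow> B, where B carries the metric d(a,b) = a + b.\<close>
definition contractive_to_B :: "'a set \<Rightarrow> ('a \<Rightarrow> 'a \<Rightarrow> 'b::comm_ring_1) \<Rightarrow> ('a \<Rightarrow> 'b) \<Rightarrow> bool" where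
  "contractive_to_B X d f \<longleftrightarrow> (\<forall>x\<in>X. \<forall>y\<in>X. ble (f x + f y) (d x y))"

end

theory Submission imports Defs begin

lemma br_idem: "boolean_ring TYPE('b::comm_ring_1) \<Longrightarrow> (a::'b)*a = a"
  by (simp add: boolean_ring_def)

lemma br_char2: assumes "boolean_ring TYPE('b::comm_ring_1)" shows "(a::'b) + a = 0"
proof -
  have "(a+a)*(a+a) = a+a" using br_idem[OF assms] by blast
  hence "a*a+a*a+(a*a+a*a) = a+a" by (simp add: algebra_simps)
  hence "a+a+(a+a) = a+a" using br_idem[OF assms, of a] by simp
  thus ?thesis by simp
qed

lemma sum_one_zero: "(\<Sum>i<n. a i) = (1::'b::comm_ring_1) \<Longrightarrow> (\<forall>i<n. a i * c = 0) \<Longrightarrow> c = 0"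
proof -
  assume s: "(\<Sum>i<n. a i) = 1" and h: "\<forall>i<n. a i * c = 0"
  have "c = (\<Sum>i<n. a i) * c" using s by simp
  also have "\<dots> = (\<Sum>i<n. a i * c)" by (simp add: sum_distrib_right)
  also have "\<dots> = 0" using h by simp
  finally show ?thesis .
qed

lemma ble_join_zero:
  fixes a u v w :: "'b::comm_ring_1"
  assumes "ble w (bjoin u v)" "a*u = 0" "a*v = 0" shows "a*w = 0"
proof -
  have "w = w*(u+v+u*v)" using assms(1) by (simp add: ble_def bjoin_def)
  hence "a*w = a*(w*(u+v+u*v))" by simp
  also have "\<dots> = w*(a*u) + w*(a*v) + w*v*(a*u)" by (simp add: algebra_simps)
  finally show ?thesis using assms by simp
qed

lemma ble_mult: "ble (w::'b::comm_ring_1) D \<Longrightarrow> a * w = w * (a * D)"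
  by (simp add: ble_def algebra_simps) (metis mult.assoc mult.commute)

lemma prod_cong_mult:
  fixes c :: "'b::comm_ring_1" and k :: nat
  shows "(\<forall>i<k. c * u i = c * v i) \<Longrightarrow> c * (\<Prod>i<k. u i) = c * (\<Prod>i<k. v i)"
proof (induction k)
  case 0 then show ?case by simp
next
  case (Suc k)
  have "c * (\<Prod>i<Suc k. u i) = (c * (\<Prod>i<k. u i)) * u k" by (simp add: algebra_simps)
  also have "\<dots> = (c * (\<Prod>i<k. v i)) * u k" using Suc by simp
  also have "\<dots> = (\<Prod>i<k. v i) * (c * u k)" by (simp add: algebra_simps)
  also have "\<dots> = (\<Prod>i<k. v i) * (c * v k)" using Suc by simp
  also have "\<dots> = c * (\<Prod>i<Suc k. v i)" by (simp add: algebra_simps)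
  finally show ?case .
qed

lemma telescope:
  fixes e :: "nat \<Rightarrow> 'b::comm_ring_1"
  shows "(\<Sum>i<k. (\<Prod>j<i. e j) * (1 - e i)) = 1 - (\<Prod>j<k. e j)"
  by (induction k) (simp_all add: algebra_simps)

lemma part_disj:
  fixes e :: "nat \<Rightarrow> 'b::comm_ring_1"
  assumes br: "boolean_ring TYPE('b)" and ij: "i < j"
  shows "((\<Prod>l<i. e l) * (1 - e i)) * ((\<Prod>l<j. e l) * (1 - e j)) = 0"
proof -
  have "(\<Prod>l<j. e l) = e i * (\<Prod>l\<in>{..<j}-{i}. e l)"
    using ij by (simp add: prod.remove)
  moreover have "(1 - e i) * e i = 0" using br_idem[OF br, of "e i"] by (simp add: algebra_simps)
  ultimately show ?thesis
    by (metis (no_types, lifting) mult.assoc mult.left_commute mult_zero_left mult_zero_right)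
qed


lemma two_part:
  fixes c :: "'b::comm_ring_1"
  assumes br: "boolean_ring TYPE('b)"
  shows "disjoint_partition_unity 2 (\<lambda>i. if i = 0 then 1 - c else c)"
proof -
  have "(1 - c) * c = 0" using br_idem[OF br, of c] by (simp add: algebra_simps)
  moreover have "\<And>i::nat. i < 2 \<longleftrightarrow> i = 0 \<or> i = 1" by auto
  ultimately show ?thesis unfolding disjoint_partition_unity_def
    by (auto simp: numeral_2_eq_2 algebra_simps)
qed

lemma dir_back:
  fixes X Y :: "'a set" and d :: "'a \<Rightarrow> 'a \<Rightarrow> 'b::comm_ring_1" and f :: "'a \<Rightarrow> 'b"
  assumes br: "boolean_ring TYPE('b)"
    and cfg: "CFG_space X d"
    and YX: "Y \<subseteq> X"
    and fc: "contractive_to_B X d f" and Yf: "Y = {x\<in>X. f x = 0}"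
  shows "CFG_space Y d"
proof -
  have bm: "bool_metric_space X d" using cfg by (simp add: CFG_space_def)
  hence dsym: "\<And>x y. x \<in> X \<Longrightarrow> y \<in> X \<Longrightarrow> d x y = d y x"
    and dtri: "\<And>x y z. x \<in> X \<Longrightarrow> y \<in> X \<Longrightarrow> z \<in> X \<Longrightarrow> ble (d x z) (bjoin (d x y) (d y z))"
    by (auto simp: bool_metric_space_def)
  have bmY: "bool_metric_space Y d" using bm YX unfolding bool_metric_space_def by blast
  have fle: "\<And>x y. x \<in> X \<Longrightarrow> y \<in> X \<Longrightarrow> ble (f x + f y) (d x y)"
    using fc by (simp add: contractive_to_B_def)
  show ?thesis
  proof (cases "Y = {}")
    case True then show ?thesis using bmY by (simp add: CFG_space_def)
  next
    case False
    then obtain y0 where y0: "y0 \<in> Y" by blast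
    hence "X \<noteq> {}" using YX by blast
    hence comb: "\<And>n xs (a::nat\<Rightarrow>'b). (\<forall>i<n. xs i \<in> X) \<Longrightarrow> disjoint_partition_unity n a \<Longrightarrow>
          (\<exists>x\<in>X. convex_comb d x n xs a)"
      and gen: "\<exists>S. finite S \<and> S \<subseteq> X \<and>
          (\<forall>x\<in>X. \<exists>n xs (a::nat\<Rightarrow>'b). (\<forall>i<n. xs i \<in> S) \<and> disjoint_partition_unity n a \<and>
                          convex_comb d x n xs a)"
      using cfg by (auto simp: CFG_space_def)
    have y0X: "y0 \<in> X" "f y0 = 0" using y0 Yf by auto
    have key: "\<And>x y a. x \<in> X \<Longrightarrow> y \<in> Y \<Longrightarrow> a * d x y = 0 \<Longrightarrow> a * f x = 0"
    proof -
      fix x y a assume x: "x \<in> X" and y: "y \<in> Y" and a: "a * d x y = 0"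
      have "y \<in> X" "f y = 0" using y Yf by auto
      hence "ble (f x) (d x y)" using fle[OF x] by fastforce
      thus "a * f x = 0" using ble_mult a by (metis mult_zero_right)
    qed
    have combY: "\<forall>n xs (a::nat\<Rightarrow>'b). (\<forall>i<n. xs i \<in> Y) \<and> disjoint_partition_unity n a \<longrightarrow>
          (\<exists>x\<in>Y. convex_comb d x n xs a)"
    proof (intro allI impI)
      fix n xs and a :: "nat \<Rightarrow> 'b" assume h: "(\<forall>i<n. xs i \<in> Y) \<and> disjoint_partition_unity n a"
      then obtain x where x: "x \<in> X" "convex_comb d x n xs a" using comb YX by blast
      have "\<forall>i<n. a i * f x = 0" using key x h by (auto simp: convex_comb_def)
      hence "f x = 0" using sum_one_zero h by (auto simp: disjoint_partition_unity_def)
      thus "\<exists>x\<in>Y. convex_comb d x n xs a" using x Yf by auto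
    qed
    obtain S where S: "finite S" "S \<subseteq> X"
      "\<forall>x\<in>X. \<exists>n xs (a::nat\<Rightarrow>'b). (\<forall>i<n. xs i \<in> S) \<and> disjoint_partition_unity n a \<and> convex_comb d x n xs a"
      using gen by blast
    have "\<forall>s\<in>S. \<exists>z. z \<in> X \<and> convex_comb d z 2 (\<lambda>i. if i = 0 then s else y0) (\<lambda>i. if i = 0 then 1 - f s else f s)"
    proof
      fix s assume "s \<in> S"
      hence "\<forall>i<(2::nat). (\<lambda>i. if i = 0 then s else y0) i \<in> X" using S y0X by auto
      thus "\<exists>z. z \<in> X \<and> convex_comb d z 2 (\<lambda>i. if i = 0 then s else y0) (\<lambda>i. if i = 0 then 1 - f s else f s)"
        using comb[of 2 "\<lambda>i. if i = 0 then s else y0" "\<lambda>i. if i = 0 then 1 - f s else f s", OF _ two_part[OF br, of "f s"]]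
        by auto
    qed
    then obtain p where pp: "\<And>s. s \<in> S \<Longrightarrow> p s \<in> X \<and> convex_comb d (p s) 2 (\<lambda>i. if i = 0 then s else y0) (\<lambda>i. if i = 0 then 1 - f s else f s)"
      by metis
    have p: "\<And>s. s \<in> S \<Longrightarrow> p s \<in> X"
      "\<And>s. s \<in> S \<Longrightarrow> (1 - f s) * d (p s) s = 0"
      "\<And>s. s \<in> S \<Longrightarrow> f s * d (p s) y0 = 0"
    proof -
      fix s assume s: "s \<in> S"
      show "p s \<in> X" using pp[OF s] by blast
      have c: "\<forall>i<(2::nat). (if i = 0 then 1 - f s else f s) * d (p s) (if i = 0 then s else y0) = 0"
        using pp[OF s] by (simp add: convex_comb_def)
      show "(1 - f s) * d (p s) s = 0" using c[rule_format, of 0] by simp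
      show "f s * d (p s) y0 = 0" using c[rule_format, of 1] by simp
    qed
    have pY: "\<And>s. s \<in> S \<Longrightarrow> p s \<in> Y"
    proof -
      fix s assume s: "s \<in> S"
      have sX: "s \<in> X" using s S by auto
      have 1: "f s * f (p s) = 0" using key[OF p(1)[OF s] y0 p(3)[OF s]] .
      have "(1 - f s) * (f (p s) + f s) = 0"
        using ble_mult[OF fle[OF p(1)[OF s] sX], of "1 - f s"] p(2)[OF s] by simp
      moreover have "(1 - f s) * f s = 0" using br_idem[OF br, of "f s"] by (simp add: algebra_simps)
      ultimately have 2: "(1 - f s) * f (p s) = 0" by (simp add: algebra_simps)
      have "f (p s) = f s * f (p s) + (1 - f s) * f (p s)" by (simp add: algebra_simps)
      hence "f (p s) = 0" using 1 2 by simp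
      thus "p s \<in> Y" using Yf p(1)[OF s] by auto
    qed
    have genY: "\<forall>y\<in>Y. \<exists>n xs (a::nat\<Rightarrow>'b). (\<forall>i<n. xs i \<in> p ` S) \<and> disjoint_partition_unity n a \<and> convex_comb d y n xs a"
    proof
      fix y assume y: "y \<in> Y"
      hence yX: "y \<in> X" using YX by auto
      obtain n xs a where r: "\<forall>i<n. xs i \<in> S" "disjoint_partition_unity n a" "convex_comb d y n xs a"
        using S(3) yX by blast
      have "\<forall>i<n. a i * d y (p (xs i)) = 0"
      proof (intro allI impI)
        fix i assume i: "i < n"
        have s: "xs i \<in> S" using r i by auto
        hence sX: "xs i \<in> X" using S by auto
        have a1: "a i * d y (xs i) = 0" using r(3) i by (simp add: convex_comb_def)
        have "a i * f (xs i) = 0" using key[OF sX y] a1 dsym[OF yX sX] by simp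
        moreover have "d (xs i) (p (xs i)) = f (xs i) * d (xs i) (p (xs i))"
          using p(2)[OF s] dsym[OF sX p(1)[OF s]] by (simp add: algebra_simps)
        ultimately have a2: "a i * d (xs i) (p (xs i)) = 0"
          by (metis mult.assoc mult_zero_left)
        show "a i * d y (p (xs i)) = 0"
          using ble_join_zero[OF dtri[OF yX sX p(1)[OF s]] a1 a2] .
      qed
      thus "\<exists>n xs (a::nat\<Rightarrow>'b). (\<forall>i<n. xs i \<in> p ` S) \<and> disjoint_partition_unity n a \<and> convex_comb d y n xs a"
        using r by (intro exI[of _ n] exI[of _ "p \<circ> xs"] exI[of _ a]) (auto simp: convex_comb_def)
    qed
    have "finite (p ` S)" "p ` S \<subseteq> Y" using S pY by auto
    then show ?thesis using bmY combY genY unfolding CFG_space_def by blast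
  qed
qed


lemma tri_eq:
  fixes D u v :: "'b::comm_ring_1"
  assumes br: "boolean_ring TYPE('b)" and h1: "ble u (bjoin D v)" and h2: "ble v (bjoin D u)"
  shows "(1 - D) * u = (1 - D) * v"
proof -
  have z: "(1 - D) * D = 0" using br_idem[OF br, of D] by (simp add: algebra_simps)
  have e1: "u = u*(D+v+D*v)" using h1 by (simp add: ble_def bjoin_def)
  have e2: "v = v*(D+u+D*u)" using h2 by (simp add: ble_def bjoin_def)
  have "(1 - D) * u = (1 - D) * (u*(D+v+D*v))" using e1 by simp
  also have "\<dots> = u*((1 - D) * D) + (1 - D)*u*v + u*v*((1 - D) * D)" by (simp add: algebra_simps)
  finally have a: "(1 - D) * u = (1 - D)*u*v" using z by simp
  have "(1 - D) * v = (1 - D) * (v*(D+u+D*u))" using e2 by simp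
  also have "\<dots> = v*((1 - D) * D) + (1 - D)*u*v + u*v*((1 - D) * D)" by (simp add: algebra_simps)
  finally have b: "(1 - D) * v = (1 - D)*u*v" using z by simp
  show ?thesis using a b by simp
qed

lemma dir_fwd:
  fixes X Y :: "'a set" and d :: "'a \<Rightarrow> 'a \<Rightarrow> 'b::comm_ring_1"
  assumes br: "boolean_ring TYPE('b)"
    and cfg: "CFG_space X d"
    and YX: "Y \<subseteq> X"
    and cfgY: "CFG_space Y d"
  shows "\<exists>f :: 'a \<Rightarrow> 'b. contractive_to_B X d f \<and> Y = {x\<in>X. f x = 0}"
proof -
  have bm: "bool_metric_space X d" using cfg by (simp add: CFG_space_def)
  hence dz: "\<And>x y. x \<in> X \<Longrightarrow> y \<in> X \<Longrightarrow> d x y = 0 \<longleftrightarrow> x = y"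
    and dsym: "\<And>x y. x \<in> X \<Longrightarrow> y \<in> X \<Longrightarrow> d x y = d y x"
    and dtri: "\<And>x y z. x \<in> X \<Longrightarrow> y \<in> X \<Longrightarrow> z \<in> X \<Longrightarrow> ble (d x z) (bjoin (d x y) (d y z))"
    by (auto simp: bool_metric_space_def)
  show ?thesis
  proof (cases "Y = {}")
    case True
    have "contractive_to_B X d (\<lambda>_. 1)"
      using br_char2[OF br, of 1] by (simp add: contractive_to_B_def ble_def)
    moreover have "Y = {x\<in>X. (1::'b) = 0}" using True by simp
    ultimately show ?thesis by blast
  next
    case False
    hence combY: "\<And>n xs (a::nat\<Rightarrow>'b). (\<forall>i<n. xs i \<in> Y) \<Longrightarrow> disjoint_partition_unity n a \<Longrightarrow>
          (\<exists>x\<in>Y. convex_comb d x n xs a)"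
      and gen: "\<exists>T. finite T \<and> T \<subseteq> Y \<and>
          (\<forall>x\<in>Y. \<exists>n xs (a::nat\<Rightarrow>'b). (\<forall>i<n. xs i \<in> T) \<and> disjoint_partition_unity n a \<and>
                          convex_comb d x n xs a)"
      using cfgY by (auto simp: CFG_space_def)
    obtain T where T: "finite T" "T \<subseteq> Y"
      "\<forall>x\<in>Y. \<exists>n xs (a::nat\<Rightarrow>'b). (\<forall>i<n. xs i \<in> T) \<and> disjoint_partition_unity n a \<and> convex_comb d x n xs a"
      using gen by blast
    obtain k and ts :: "nat \<Rightarrow> 'a" where kt: "T = ts ` {i. i < k}"
      using finite_imp_nat_seg_image_inj_on[OF T(1)] by blast
    have tsY: "\<And>i. i < k \<Longrightarrow> ts i \<in> Y" using kt T(2) by auto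
    hence tsX: "\<And>i. i < k \<Longrightarrow> ts i \<in> X" using YX by auto
    define f where "f x = (\<Prod>i<k. d x (ts i))" for x
    have contr: "contractive_to_B X d f"
      unfolding contractive_to_B_def
    proof (intro ballI)
      fix x y assume x: "x \<in> X" and y: "y \<in> X"
      let ?D = "d x y"
      have "\<forall>i<k. (1 - ?D) * d x (ts i) = (1 - ?D) * d y (ts i)"
      proof (intro allI impI)
        fix i assume i: "i < k"
        show "(1 - ?D) * d x (ts i) = (1 - ?D) * d y (ts i)"
          using tri_eq[OF br dtri[OF x y tsX[OF i]]] dtri[OF y x tsX[OF i]] dsym[OF x y] by simp
      qed
      hence e: "(1 - ?D) * f x = (1 - ?D) * f y" unfolding f_def by (rule prod_cong_mult)
      have "(1 - ?D) * (f x + f y) = (1 - ?D) * f x + (1 - ?D) * f x" using e by (simp add: algebra_simps)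
      hence z: "(1 - ?D) * (f x + f y) = 0" using br_char2[OF br] by simp
      have "f x + f y = (f x + f y) * ?D + (1 - ?D) * (f x + f y)" by (simp add: algebra_simps)
      thus "ble (f x + f y) ?D" using z by (simp add: ble_def)
    qed
    have "Y = {x\<in>X. f x = 0}"
    proof
      show "Y \<subseteq> {x\<in>X. f x = 0}"
      proof
        fix y assume y: "y \<in> Y"
        obtain n xs and a :: "nat \<Rightarrow> 'b" where r: "\<forall>i<n. xs i \<in> T" "disjoint_partition_unity n a" "convex_comb d y n xs a"
          using T(3) y by blast
        have "\<forall>j<n. a j * f y = 0"
        proof (intro allI impI)
          fix j assume j: "j < n"
          then obtain i where i: "i < k" "xs j = ts i" using r(1) kt by auto
          have "f y = d y (ts i) * (\<Prod>l\<in>{..<k}-{i}. d y (ts l))"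
            unfolding f_def using i by (simp add: prod.remove)
          moreover have "a j * d y (ts i) = 0" using r(3) j i unfolding convex_comb_def by metis
          ultimately show "a j * f y = 0" by (metis mult.assoc mult_zero_left)
        qed
        hence "f y = 0" using sum_one_zero r(2) by (auto simp: disjoint_partition_unity_def)
        thus "y \<in> {x\<in>X. f x = 0}" using y YX by auto
      qed
    next
      show "{x\<in>X. f x = 0} \<subseteq> Y"
      proof
        fix x assume "x \<in> {x\<in>X. f x = 0}"
        hence x: "x \<in> X" "f x = 0" by auto
        define e where "e i = d x (ts i)" for i
        define b where "b i = (\<Prod>l<i. e l) * (1 - e i)" for i
        have dp: "disjoint_partition_unity k b"
          unfolding disjoint_partition_unity_def
        proof
          show "\<forall>i<k. \<forall>j<k. i \<noteq> j \<longrightarrow> b i * b j = 0"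
          proof (intro allI impI)
            fix i j :: nat assume "i \<noteq> j"
            then consider "i < j" | "j < i" by linarith
            thus "b i * b j = 0"
              unfolding b_def
              by cases (use part_disj[OF br, of i j e] part_disj[OF br, of j i e] in \<open>simp_all add: mult.commute\<close>)
          qed
          show "(\<Sum>i<k. b i) = 1" unfolding b_def telescope using x(2) by (simp add: f_def e_def)
        qed
        obtain y where y: "y \<in> Y" "convex_comb d y k ts b"
          using combY[OF _ dp] tsY by blast
        have yX: "y \<in> X" using y YX by auto
        have "\<forall>i<k. b i * d x y = 0"
        proof (intro allI impI)
          fix i assume i: "i < k"
          have "(1 - e i) * e i = 0" using br_idem[OF br, of "e i"] by (simp add: algebra_simps)
          hence a1: "b i * d x (ts i) = 0" by (simp add: b_def e_def mult.assoc)
          have a2: "b i * d (ts i) y = 0" using y(2) i dsym[OF yX tsX[OF i]] unfolding convex_comb_def by metis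
          show "b i * d x y = 0" using ble_join_zero[OF dtri[OF x(1) tsX[OF i] yX] a1 a2] .
        qed
        hence "d x y = 0" using sum_one_zero dp by (auto simp: disjoint_partition_unity_def)
        hence "x = y" using dz[OF x(1) yX] by simp
        thus "x \<in> Y" using y by simp
      qed
    qed
    thus ?thesis using contr by blast
  qed
qed

theorem mainTheorem7:
  fixes X Y :: "'a set" and d :: "'a \<Rightarrow> 'a \<Rightarrow> 'b::comm_ring_1"
  assumes "boolean_ring TYPE('b)"
    and "CFG_space X d"
    and "Y \<subseteq> X"
  shows "CFG_space Y d \<longleftrightarrow>
         (\<exists>f :: 'a \<Rightarrow> 'b. contractive_to_B X d f \<and> Y = {x\<in>X. f x = 0})"
  using dir_fwd[OF assms] dir_back[OF assms] by blast

end
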